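(* Let $\sigma(u)=1/(1+e^{-u})$, $\sigma_\tau(u)=\sigma(u/\tau)$ for $\tau>0$, let $z$ be a standard logistic random variable, $\eta\in\mathbb{R}$, and $\mathcal L:[0,1]\to\mathbb{R}$ continuously differentiable. Let $\hat G_\tau=\frac{d}{d\eta}\mathcal L(\sigma_\tau(\eta-z))$ be the Gumbel-Softmax gradient estimator. Then $\mathrm{Var}_z(\hat G_\tau)=O(1/\tau)$ as $\tau\to0^+$. *)

theory Defs
  imports "HOL-Probability.Probability" "HOL-Library.Landau_Symbols"
begin

definition sigmoid :: "real \<Rightarrow> real" where
  "sigmoid u = 1 / (1 + exp (- u))"

definition sigmoid_temp :: "real \<Rightarrow> real \<Rightarrow> real" where
  "sigmoid_temp \<tau> u = sigmoid (u / \<tau>)"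

definition logistic_pdf :: "real \<Rightarrow> real" where
  "logistic_pdf z = exp (- z) / (1 + exp (- z))\<^sup>2"

definition logistic_measure :: "real measure" where
  "logistic_measure = density lborel (\<lambda>z. ennreal (logistic_pdf z))"

definition gs_estimator :: "(real \<Rightarrow> real) \<Rightarrow> real \<Rightarrow> real \<Rightarrow> real \<Rightarrow> real" where
  "gs_estimator L \<tau> \<eta> z = deriv (\<lambda>e. L (sigmoid_temp \<tau> (e - z))) \<eta>"

definition variance_under :: "real measure \<Rightarrow> (real \<Rightarrow> real) \<Rightarrow> real" where
  "variance_under M X = (LINT z|M. (X z - (LINT w|M. X w))\<^sup>2)"

end

theory Submission imports Defs "HOL-Real_Asymp.Real_Asymp" begin

lemma ne1: "1 + exp (x::real) \<noteq> 0"
  using add_pos_pos[OF zero_less_one exp_gt_zero, of x] by linarith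

lemma sigmoid_deriv: "(sigmoid has_real_derivative logistic_pdf u) (at u)"
  unfolding sigmoid_def logistic_pdf_def
  by (auto intro!: derivative_eq_intros simp: power2_eq_square add_pos_pos[OF zero_less_one exp_gt_zero] ne1)

lemma pdf_nonneg: "0 \<le> logistic_pdf u"
  unfolding logistic_pdf_def by simp

lemma pdf_le: "logistic_pdf u \<le> 1/4"
proof -
  have "4 * exp (-u) \<le> (1 + exp (-u))\<^sup>2"
  proof -
    have "0 \<le> (exp (-u) - 1)^2" by simp
    then show ?thesis by (simp add: power2_eq_square algebra_simps)
  qed
  moreover have "0 < (1 + exp (-u))^2" using ne1[of "-u"] by simp
  ultimately show ?thesis unfolding logistic_pdf_def by (simp add: pos_divide_le_eq)
qed

lemma pdf_cont: "isCont logistic_pdf u"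
  unfolding logistic_pdf_def by (intro continuous_intros) (auto simp: ne1)

lemma sigmoid_bounds: "0 < sigmoid u" "sigmoid u < 1"
  unfolding sigmoid_def using add_pos_pos[OF zero_less_one exp_gt_zero, of "-u"] by (auto simp: field_simps)

lemma ftc_shift:
  assumes "0 < \<tau>"
  shows "integrable lborel (\<lambda>z. logistic_pdf ((a - z) / \<tau>))"
    "(LINT z|lborel. logistic_pdf ((a - z) / \<tau>)) = \<tau>"
proof -
  let ?F = "\<lambda>z. - \<tau> * sigmoid ((a - z) / \<tau>)"
  have d: "DERIV ?F x :> logistic_pdf ((a - x) / \<tau>)" for x
    using assms by (auto intro!: derivative_eq_intros DERIV_chain2[OF sigmoid_deriv])
  have c: "isCont (\<lambda>z. logistic_pdf ((a - z) / \<tau>)) x" for x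
    using assms by (intro continuous_intros isCont_o2[OF _ pdf_cont]) auto
  have l1: "(?F \<longlongrightarrow> 0) at_top" using assms unfolding sigmoid_def by real_asymp
  have l2: "(?F \<longlongrightarrow> -\<tau>) at_bot" using assms unfolding sigmoid_def by real_asymp
  note r = interval_integral_FTC_nonneg[of "-\<infinity>" "\<infinity>" ?F "\<lambda>z. logistic_pdf ((a - z) / \<tau>)" "-\<tau>" 0]
  have A: "set_integrable lborel (einterval (-\<infinity>) \<infinity>) (\<lambda>z. logistic_pdf ((a - z) / \<tau>))"
    "(LBINT x=-\<infinity>..\<infinity>. logistic_pdf ((a - x) / \<tau>)) = 0 - - \<tau>"
    by (rule r; (use d c pdf_nonneg l1 l2 in \<open>auto simp: ereal_tendsto_simps1\<close>))+
  then show "integrable lborel (\<lambda>z. logistic_pdf ((a - z) / \<tau>))"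
    "(LINT z|lborel. logistic_pdf ((a - z) / \<tau>)) = \<tau>"
    by (auto simp: set_integrable_def interval_lebesgue_integral_def set_lebesgue_integral_def einterval_eq_UNIV)
qed


lemma pdf_sym: "logistic_pdf (-z) = logistic_pdf z"
  unfolding logistic_pdf_def using ne1[of z] ne1[of "-z"]
  by (simp add: exp_minus field_simps power2_eq_square)

lemma pdf_meas [measurable]: "logistic_pdf \<in> borel_measurable borel"
  by (intro borel_measurable_continuous_onI continuous_at_imp_continuous_on ballI pdf_cont)

lemma pdf_int: "integrable lborel logistic_pdf" "(LINT z|lborel. logistic_pdf z) = 1"
  using ftc_shift[of 1 0] by (simp_all add: pdf_sym)

lemma prob_logistic: "prob_space logistic_measure"
proof (rule prob_spaceI)
  have "emeasure logistic_measure (space logistic_measure) = (\<integral>\<^sup>+ z. ennreal (logistic_pdf z) \<partial>lborel)"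
    unfolding logistic_measure_def by (subst emeasure_density) auto
  also have "\<dots> = ennreal (LINT z|lborel. logistic_pdf z)"
    using pdf_int(1) pdf_nonneg by (intro nn_integral_eq_integral) auto
  finally show "emeasure logistic_measure (space logistic_measure) = 1" using pdf_int(2) by simp
qed

theorem propositionE4:
  fixes L L' :: "real \<Rightarrow> real" and \<eta> :: real
  assumes "\<forall>x\<in>{0..1}. (L has_real_derivative L' x) (at x within {0..1})"
      and "continuous_on {0..1} L'"
  shows "(\<lambda>\<tau>. variance_under logistic_measure (gs_estimator L \<tau> \<eta>))
           \<in> O[at_right 0](\<lambda>\<tau>. 1 / \<tau>)"
proof -
  have "bounded (L' ` {0..1})"
    using compact_continuous_image[OF assms(2) compact_Icc] compact_imp_bounded by blast
  then obtain B where "\<forall>x\<in>{0..1}. norm (L' x) \<le> B"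
    unfolding bounded_iff by auto
  then have B: "\<And>x. x \<in> {0..1} \<Longrightarrow> \<bar>L' x\<bar> \<le> B" by auto
  have B0: "0 \<le> B" using B[of 0] by simp
  interpret P: prob_space logistic_measure by (rule prob_logistic)
  have main: "variance_under logistic_measure (gs_estimator L \<tau> \<eta>) \<le> B\<^sup>2 / 16 * (1 / \<tau>)"
    if tau: "0 < \<tau>" for \<tau>
  proof -
    define G where "G z = L' (sigmoid ((\<eta> - z) / \<tau>)) * (logistic_pdf ((\<eta> - z) / \<tau>) / \<tau>)" for z
    have dL: "(L has_real_derivative L' s) (at s)" if "0 < s" "s < 1" for s
    proof -
      have "at s within {0..1} = at s" using that by (intro at_within_interior) auto
      moreover have "(L has_real_derivative L' s) (at s within {0..1})" using assms(1) that by auto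
      ultimately show ?thesis by simp
    qed
    have geq: "gs_estimator L \<tau> \<eta> z = G z" for z
    proof -
      have di: "((\<lambda>e. sigmoid ((e - z) / \<tau>)) has_real_derivative logistic_pdf ((\<eta> - z) / \<tau>) * (1 / \<tau>)) (at \<eta>)"
        by (rule DERIV_chain2[OF sigmoid_deriv]) (use tau in \<open>auto intro!: derivative_eq_intros\<close>)
      have "((\<lambda>e. L (sigmoid ((e - z) / \<tau>))) has_real_derivative G z) (at \<eta>)"
        unfolding G_def using DERIV_chain2[OF dL di] sigmoid_bounds by simp
      then show ?thesis unfolding gs_estimator_def sigmoid_temp_def by (rule DERIV_imp_deriv)
    qed
    have Gfun: "gs_estimator L \<tau> \<eta> = G" using geq by auto
    have contG: "continuous_on UNIV G"
    proof -
      have "continuous_on UNIV (\<lambda>z. L' (sigmoid ((\<eta> - z) / \<tau>)))"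
      proof (rule continuous_on_compose2[OF assms(2)])
        show "continuous_on UNIV (\<lambda>z. sigmoid ((\<eta> - z) / \<tau>))"
          using tau unfolding sigmoid_def by (intro continuous_intros) (auto simp: ne1)
        show "(\<lambda>z. sigmoid ((\<eta> - z) / \<tau>)) ` UNIV \<subseteq> {0..1}"
          using sigmoid_bounds by (auto simp: less_imp_le)
      qed
      moreover have "continuous_on UNIV (\<lambda>z. logistic_pdf ((\<eta> - z) / \<tau>) / \<tau>)"
        using tau unfolding logistic_pdf_def by (intro continuous_intros) (auto simp: ne1)
      ultimately show ?thesis unfolding G_def by (rule continuous_on_mult)
    qed
    have Gm: "G \<in> borel_measurable borel" using contG by (rule borel_measurable_continuous_onI)
    have GmL: "G \<in> borel_measurable logistic_measure"
      unfolding logistic_measure_def using Gm by simp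
    have Gb: "\<bar>G z\<bar> \<le> B / 4 / \<tau>" for z
    proof -
      have "\<bar>G z\<bar> = \<bar>L' (sigmoid ((\<eta> - z) / \<tau>))\<bar> * (logistic_pdf ((\<eta> - z) / \<tau>) / \<tau>)"
        unfolding G_def using pdf_nonneg tau by (simp add: abs_mult)
      also have "\<dots> \<le> B * ((1/4) / \<tau>)"
        using B sigmoid_bounds pdf_le pdf_nonneg tau B0
        by (intro mult_mono divide_right_mono) (auto simp: less_imp_le)
      finally show ?thesis by simp
    qed
    have G2b: "(G z)\<^sup>2 \<le> B\<^sup>2 / 4 / \<tau>\<^sup>2 * logistic_pdf ((\<eta> - z) / \<tau>)" for z
    proof -
      let ?p = "logistic_pdf ((\<eta> - z) / \<tau>)"
      have "(G z)\<^sup>2 = (L' (sigmoid ((\<eta> - z) / \<tau>)))\<^sup>2 * (?p * ?p) / \<tau>\<^sup>2"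
        unfolding G_def by (simp add: power2_eq_square field_simps)
      also have "\<dots> \<le> B\<^sup>2 * ((1/4) * ?p) / \<tau>\<^sup>2"
      proof -
        have a: "(L' (sigmoid ((\<eta> - z) / \<tau>)))\<^sup>2 \<le> B\<^sup>2"
        proof -
          have "\<bar>L' (sigmoid ((\<eta> - z) / \<tau>))\<bar> \<le> B"
            using B[of "sigmoid ((\<eta> - z) / \<tau>)"] sigmoid_bounds by (auto simp: less_imp_le)
          then have "\<bar>L' (sigmoid ((\<eta> - z) / \<tau>))\<bar>\<^sup>2 \<le> B\<^sup>2" by (intro power_mono) auto
          then show ?thesis by simp
        qed
        have b: "?p * ?p \<le> 1/4 * ?p" using pdf_le pdf_nonneg by (intro mult_right_mono) auto
        show ?thesis using pdf_nonneg by (intro divide_right_mono mult_mono a b) auto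
      qed
      finally show ?thesis by simp
    qed
    have iG: "integrable logistic_measure G"
      using Gb GmL by (intro P.integrable_const_bound[where B="B / 4 / \<tau>"]) auto
    have iG2: "integrable logistic_measure (\<lambda>z. (G z)\<^sup>2)"
    proof (intro P.integrable_const_bound[where B="(B / 4 / \<tau>)\<^sup>2"])
      show "AE x in logistic_measure. norm ((G x)\<^sup>2) \<le> (B / 4 / \<tau>)\<^sup>2"
      proof (intro AE_I2)
        fix x
        have "\<bar>G x\<bar>\<^sup>2 \<le> (B / 4 / \<tau>)\<^sup>2" using Gb[of x] by (intro power_mono) auto
        then show "norm ((G x)\<^sup>2) \<le> (B / 4 / \<tau>)\<^sup>2" by simp
      qed
    qed (use GmL in simp)
    have "variance_under logistic_measure G = P.expectation (\<lambda>z. (G z)\<^sup>2) - (P.expectation G)\<^sup>2"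
      unfolding variance_under_def by (rule P.variance_eq[OF iG iG2])
    also have "\<dots> \<le> P.expectation (\<lambda>z. (G z)\<^sup>2)" by simp
    also have "\<dots> = (LINT z|lborel. logistic_pdf z * (G z)\<^sup>2)"
      unfolding logistic_measure_def using Gm pdf_nonneg
      by (subst integral_density) (auto simp: measurable_completion)
    also have "\<dots> \<le> (LINT z|lborel. B\<^sup>2 / 16 / \<tau>\<^sup>2 * logistic_pdf ((\<eta> - z) / \<tau>))"
    proof (rule integral_mono')
      show "integrable lborel (\<lambda>z. B\<^sup>2 / 16 / \<tau>\<^sup>2 * logistic_pdf ((\<eta> - z) / \<tau>))"
        using ftc_shift(1)[OF tau] by simp
      fix z
      show "0 \<le> B\<^sup>2 / 16 / \<tau>\<^sup>2 * logistic_pdf ((\<eta> - z) / \<tau>)" using pdf_nonneg by simp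
      have "logistic_pdf z * (G z)\<^sup>2 \<le> (1/4) * (B\<^sup>2 / 4 / \<tau>\<^sup>2 * logistic_pdf ((\<eta> - z) / \<tau>))"
        using pdf_le pdf_nonneg G2b by (intro mult_mono) auto
      then show "logistic_pdf z * (G z)\<^sup>2 \<le> B\<^sup>2 / 16 / \<tau>\<^sup>2 * logistic_pdf ((\<eta> - z) / \<tau>)"
        by simp
    qed
    also have "\<dots> = B\<^sup>2 / 16 / \<tau>\<^sup>2 * \<tau>" using ftc_shift(2)[OF tau] by simp
    also have "\<dots> = B\<^sup>2 / 16 * (1 / \<tau>)" using tau by (simp add: power2_eq_square)
    finally show ?thesis unfolding Gfun .
  qed
  show ?thesis
  proof (rule bigoI[where c="B\<^sup>2 / 16"])
    have "eventually (\<lambda>\<tau>::real. 0 < \<tau>) (at_right 0)" by (simp add: eventually_at_filter)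
    then show "eventually (\<lambda>\<tau>. norm (variance_under logistic_measure (gs_estimator L \<tau> \<eta>))
               \<le> B\<^sup>2 / 16 * norm (1 / \<tau>)) (at_right 0)"
    proof (rule eventually_mono)
      fix \<tau> :: real assume t: "0 < \<tau>"
      have "0 \<le> variance_under logistic_measure (gs_estimator L \<tau> \<eta>)"
        unfolding variance_under_def by (rule integral_nonneg_AE) simp
      then show "norm (variance_under logistic_measure (gs_estimator L \<tau> \<eta>))
               \<le> B\<^sup>2 / 16 * norm (1 / \<tau>)" using main[OF t] t by simp
    qed
  qed
qed

end
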